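(* Let $\epsilon_1,\epsilon_2,\dots$ be independent Rademacher random variables and $S_m=\epsilon_1+\dots+\epsilon_m$. Let $k\ge2$ be an integer and for $i=0,1,\dots,k-1$ let $$\delta_i:=\mathbb{P}\{S_{k^2+2i-1}=k+1\}-\mathbb{P}\{S_{k^2+2i}=k\}=\frac{\binom{k^2-1+2i}{k(k-1)/2+i-1}}{2^{k^2-1+2i}}-\frac{\binom{k^2+2i}{k(k-1)/2+i}}{2^{k^2+2i}}.$$ Then $$\delta_0\le\delta_1\le\dots\le\delta_{k-1}<0.$$
   Context: A Rademacher random variable takes the values $1$ and $-1$ each with probability $1/2$. *)

theory Defs
  imports "HOL-Probability.Probability"
begin

text \<open>eps 1, eps 2, ... are independent Rademacher random variables on the probability space M
  (index 0 is unused).\<close>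
definition rademacher_seq :: "'a measure \<Rightarrow> (nat \<Rightarrow> 'a \<Rightarrow> real) \<Rightarrow> bool" where
  "rademacher_seq M eps \<longleftrightarrow>
     prob_space.indep_vars M (\<lambda>_. borel) eps {1..} \<and>
     (\<forall>i\<ge>1. measure M {\<omega> \<in> space M. eps i \<omega> = 1} = 1/2 \<and>
             measure M {\<omega> \<in> space M. eps i \<omega> = -1} = 1/2)"

definition partial_sum :: "(nat \<Rightarrow> 'a \<Rightarrow> real) \<Rightarrow> nat \<Rightarrow> 'a \<Rightarrow> real" where
  "partial_sum eps m \<omega> = (\<Sum>j\<in>{1..m}. eps j \<omega>)"

definition delta :: "'a measure \<Rightarrow> (nat \<Rightarrow> 'a \<Rightarrow> real) \<Rightarrow> nat \<Rightarrow> nat \<Rightarrow> real" where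
  "delta M eps k i =
     measure M {\<omega> \<in> space M. partial_sum eps (k^2 + 2*i - 1) \<omega> = real k + 1}
   - measure M {\<omega> \<in> space M. partial_sum eps (k^2 + 2*i) \<omega> = real k}"

end

theory Submission
  imports Defs
begin

lemma rad_meas:
  assumes "prob_space M" "rademacher_seq M eps" "i \<ge> 1"
  shows "eps i \<in> borel_measurable M"
proof -
  interpret prob_space M by fact
  show ?thesis using assms(2,3) unfolding rademacher_seq_def indep_vars_def2 by auto
qed

lemma prob_cyl:
  assumes "prob_space M" "rademacher_seq M eps" "s \<in> PiE {1..m} (\<lambda>_. {-1,1})"
  shows "measure M {\<omega>\<in>space M. \<forall>i\<in>{1..m}. eps i \<omega> = s i} = (1/2)^m"
proof -
  interpret prob_space M by fact
  have ind: "indep_sets (\<lambda>i. {eps i -` A \<inter> space M | A. A \<in> sets borel}) {1..}"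
    using assms(2) unfolding rademacher_seq_def indep_vars_def2 by auto
  show ?thesis
  proof (cases "m = 0")
    case True then show ?thesis by (simp add: prob_space)
  next
    case False
    let ?A = "\<lambda>j. eps j -` {s j} \<inter> space M"
    have pi: "?A \<in> Pi {1..m} (\<lambda>i. {eps i -` A \<inter> space M | A. A \<in> sets borel})" by auto
    have "prob (\<Inter>j\<in>{1..m}. ?A j) = (\<Prod>j\<in>{1..m}. prob (?A j))"
    proof -
      have "\<forall>J\<subseteq>{1..}. J \<noteq> {} \<longrightarrow> finite J \<longrightarrow> (\<forall>A\<in>Pi J (\<lambda>i. {eps i -` A \<inter> space M | A. A \<in> sets borel}). prob (\<Inter>j\<in>J. A j) = (\<Prod>j\<in>J. prob (A j)))"
        using ind unfolding indep_sets_def by blast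
      moreover have "{1..m} \<subseteq> {1..}" "{1..m} \<noteq> {}" "finite {1..m}" using False by auto
      ultimately show ?thesis using pi by blast
    qed
    moreover have "(\<Inter>j\<in>{1..m}. ?A j) = {\<omega>\<in>space M. \<forall>i\<in>{1..m}. eps i \<omega> = s i}"
      using False by auto
    moreover have "prob (?A j) = 1/2" if "j \<in> {1..m}" for j
    proof -
      have "s j \<in> {-1,1}" using assms(3) that by auto
      moreover have "?A j = {\<omega> \<in> space M. eps j \<omega> = s j}" by auto
      ultimately show ?thesis using assms(2) that unfolding rademacher_seq_def by auto
    qed
    ultimately show ?thesis by simp
  qed
qed

lemma ae_pm:
  assumes "prob_space M" "rademacher_seq M eps"
  shows "AE \<omega> in M. \<forall>i\<in>{1..m}. eps i \<omega> \<in> {-1,1}"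
proof -
  interpret prob_space M by fact
  have "AE \<omega> in M. eps i \<omega> \<in> {-1,1}" if i: "i \<in> {1..m}" for i
  proof -
    have em: "eps i \<in> borel_measurable M" using rad_meas[OF assms] i by auto
    have "{\<omega> \<in> space M. eps i \<omega> \<in> {-1,1}} = {\<omega> \<in> space M. eps i \<omega> = 1} \<union> {\<omega> \<in> space M. eps i \<omega> = -1}" by auto
    moreover have "prob ({\<omega> \<in> space M. eps i \<omega> = 1} \<union> {\<omega> \<in> space M. eps i \<omega> = -1}) = 1/2 + 1/2"
      using assms(2) i em unfolding rademacher_seq_def
      by (subst finite_measure_Union) auto
    ultimately have "prob {\<omega> \<in> space M. eps i \<omega> \<in> {-1,1}} = 1" by simp
    from AE_prob_1[OF this] show ?thesis by auto
  qed
  then show ?thesis by (auto intro: AE_finite_allI)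
qed


lemma sum_pm:
  assumes "B \<subseteq> {1..m}"
  shows "(\<Sum>i\<in>{1..m}. (if i \<in> B then 1 else -1 :: real)) = 2 * real (card B) - real m"
proof -
  have fB: "finite B" using assms finite_subset by blast
  have "(\<Sum>i\<in>{1..m}. (if i \<in> B then 1 else -1 :: real))
      = (\<Sum>i\<in>{1..m} \<inter> {x. x \<in> B}. 1) + (\<Sum>i\<in>{1..m} \<inter> - {x. x \<in> B}. -1)"
    by (rule sum.If_cases) simp
  also have "{1..m} \<inter> {x. x \<in> B} = B" using assms by auto
  also have "{1..m} \<inter> - {x. x \<in> B} = {1..m} - B" by auto
  also have "card ({1..m} - B) = m - card B" using assms fB by (simp add: card_Diff_subset)
  then have "(\<Sum>i\<in>{1..m} - B. -1::real) = - real (m - card B)" by simp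
  also have "card B \<le> m" using card_mono[OF _ assms] by simp
  ultimately show ?thesis by (simp add: of_nat_diff)
qed

lemma card_T:
  assumes "r \<le> m"
  shows "card {s \<in> PiE {1..m} (\<lambda>_. {-1::real,1}). (\<Sum>i\<in>{1..m}. s i) = 2*real r - real m} = m choose r"
proof -
  define g where "g B = (\<lambda>i. if i \<in> {1..m} then (if i \<in> B then 1 else -1 :: real) else undefined)" for B :: "nat set"
  let ?S = "{B. B \<subseteq> {1..m} \<and> card B = r}"
  let ?T = "{s \<in> PiE {1..m} (\<lambda>_. {-1::real,1}). (\<Sum>i\<in>{1..m}. s i) = 2*real r - real m}"
  have inj: "inj_on g ?S"
  proof (rule inj_onI)
    fix B B' assume B: "B \<in> ?S" and B': "B' \<in> ?S" and e: "g B = g B'"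
    show "B = B'"
    proof (rule set_eqI)
      fix x
      show "x \<in> B \<longleftrightarrow> x \<in> B'"
      proof (cases "x \<in> {1..m}")
        case True
        then show ?thesis using fun_cong[OF e, of x] unfolding g_def by (auto split: if_splits)
      next
        case False then show ?thesis using B B' by auto
      qed
    qed
  qed
  have img: "g ` ?S = ?T"
  proof
    show "g ` ?S \<subseteq> ?T"
    proof
      fix s assume "s \<in> g ` ?S"
      then obtain B where B: "B \<in> ?S" and s: "s = g B" by auto
      have "(\<Sum>i\<in>{1..m}. s i) = (\<Sum>i\<in>{1..m}. (if i \<in> B then 1 else -1 :: real))"
        unfolding s g_def by (rule sum.cong) auto
      also have "\<dots> = 2*real r - real m" using sum_pm[of B m] B by simp
      finally show "s \<in> ?T" unfolding s g_def by (auto simp: PiE_def extensional_def)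
    qed
  next
    show "?T \<subseteq> g ` ?S"
    proof
      fix s assume sT: "s \<in> ?T"
      define B where "B = {i \<in> {1..m}. s i = 1}"
      have BI: "B \<subseteq> {1..m}" unfolding B_def by auto
      have gs: "g B = s"
      proof
        fix i show "g B i = s i"
        proof (cases "i \<in> {1..m}")
          case True
          then have "s i \<in> {-1,1}" using sT by (auto simp: PiE_def Pi_def)
          then show ?thesis using True unfolding g_def B_def by auto
        next
          case False then show ?thesis using sT unfolding g_def B_def by (auto simp: PiE_def extensional_def)
        qed
      qed
      have "(\<Sum>i\<in>{1..m}. s i) = (\<Sum>i\<in>{1..m}. (if i \<in> B then 1 else -1 :: real))"
        unfolding gs[symmetric] g_def by (rule sum.cong) auto
      then have "2 * real (card B) - real m = 2*real r - real m" using sum_pm[OF BI] sT by simp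
      then have "card B = r" by simp
      with BI gs show "s \<in> g ` ?S" by auto
    qed
  qed
  have "card ?T = card ?S" using card_image[OF inj] img by simp
  also have "\<dots> = m choose r" using n_subsets[of "{1..m}" r] by simp
  finally show ?thesis .
qed

lemma prob_S:
  assumes "prob_space M" "rademacher_seq M eps" "r \<le> m"
  shows "measure M {\<omega>\<in>space M. partial_sum eps m \<omega> = 2*real r - real m} = real (m choose r) / 2^m"
proof -
  interpret prob_space M by fact
  let ?I = "{1..m}"
  let ?x = "2*real r - real m"
  let ?T = "{s \<in> PiE ?I (\<lambda>_. {-1::real,1}). (\<Sum>i\<in>?I. s i) = ?x}"
  let ?E = "\<lambda>s. {\<omega>\<in>space M. \<forall>i\<in>?I. eps i \<omega> = s i}"
  have meas: "eps i \<in> borel_measurable M" if "i \<in> ?I" for i using rad_meas[OF assms(1,2)] that by auto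
  have setE: "?E s \<in> sets M" for s
  proof (rule sets.sets_Collect_finite_All)
    fix i assume "i \<in> ?I"
    have "{\<omega>\<in>space M. eps i \<omega> = s i} = eps i -` {s i} \<inter> space M" by auto
    then show "{\<omega>\<in>space M. eps i \<omega> = s i} \<in> sets M" using measurable_sets[OF meas[OF \<open>i\<in>?I\<close>]] by simp
  qed simp
  have ps: "partial_sum eps m \<in> borel_measurable M"
    unfolding partial_sum_def[abs_def] by (rule borel_measurable_sum) (rule meas)
  have setS: "{\<omega>\<in>space M. partial_sum eps m \<omega> = ?x} \<in> sets M"
  proof -
    have "{\<omega>\<in>space M. partial_sum eps m \<omega> = ?x} = partial_sum eps m -` {?x} \<inter> space M" by auto
    then show ?thesis using measurable_sets[OF ps] by simp
  qed
  have finT: "finite ?T" by (rule finite_subset[of _ "PiE ?I (\<lambda>_. {-1::real,1})"]) (auto intro: finite_PiE)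
  have setU: "(\<Union>s\<in>?T. ?E s) \<in> sets M" using finT setE by auto
  have ae: "AE \<omega> in M. \<omega> \<in> {\<omega>\<in>space M. partial_sum eps m \<omega> = ?x} \<longleftrightarrow> \<omega> \<in> (\<Union>s\<in>?T. ?E s)"
    using ae_pm[OF assms(1,2), of m]
  proof (eventually_elim)
    case (elim \<omega>)
    show ?case
    proof
      assume a: "\<omega> \<in> {\<omega>\<in>space M. partial_sum eps m \<omega> = ?x}"
      let ?s = "restrict (\<lambda>i. eps i \<omega>) ?I"
      have "?s \<in> ?T" using a elim unfolding partial_sum_def by auto
      moreover have "\<omega> \<in> ?E ?s" using a by auto
      ultimately show "\<omega> \<in> (\<Union>s\<in>?T. ?E s)" by blast
    next
      assume "\<omega> \<in> (\<Union>s\<in>?T. ?E s)"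
      then obtain s where s: "s \<in> ?T" "\<omega> \<in> ?E s" by blast
      then have "partial_sum eps m \<omega> = (\<Sum>i\<in>?I. s i)" unfolding partial_sum_def by (intro sum.cong) auto
      then show "\<omega> \<in> {\<omega>\<in>space M. partial_sum eps m \<omega> = ?x}" using s by auto
    qed
  qed
  have "prob {\<omega>\<in>space M. partial_sum eps m \<omega> = ?x} = prob (\<Union>s\<in>?T. ?E s)"
    by (rule finite_measure_eq_AE[OF ae setS setU])
  also have "\<dots> = (\<Sum>s\<in>?T. prob (?E s))"
  proof (rule finite_measure_finite_Union[OF finT])
    show "?E ` ?T \<subseteq> sets M" using setE by auto
    show "disjoint_family_on ?E ?T"
      unfolding disjoint_family_on_def
    proof (intro ballI impI)
      fix s t assume s: "s \<in> ?T" and t: "t \<in> ?T" and st: "s \<noteq> t"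
      then obtain i where "i \<in> ?I" "s i \<noteq> t i" by (metis (no_types, lifting) PiE_ext mem_Collect_eq)
      then show "?E s \<inter> ?E t = {}" by auto
    qed
  qed
  also have "\<dots> = (\<Sum>s\<in>?T. (1/2)^m)" using prob_cyl[OF assms(1,2)] by (intro sum.cong) blast+
  also have "\<dots> = real (m choose r) * (1/2)^m" using card_T[OF assms(3)] by simp
  finally show ?thesis by (simp add: power_one_over divide_simps)
qed


lemma delta_formula:
  assumes "prob_space M" "rademacher_seq M eps" "k \<ge> 2"
  shows "delta M eps k i = - real k * real ((k^2+2*i) choose ((k^2+k) div 2 + i)) / (real (k^2+2*i) * 2^(k^2+2*i))"
proof -
  define m where "m = k^2+2*i"
  define b where "b = (k^2+k) div 2 + i"
  have ev: "even (k^2+k)" by (simp add: power2_eq_square)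
  have b2: "2*b = m + k" unfolding b_def m_def using ev by (auto elim!: evenE)
  have kk: "k^2 \<ge> 2*k" using assms(3) by (simp add: power2_eq_square)
  have bm: "b \<le> m - 1" using b2 kk assms(3) unfolding m_def by linarith
  have m1: "m \<ge> 1" using kk assms(3) unfolding m_def by linarith
  have e1: "real k + 1 = 2*real b - real (m - 1)"
  proof -
    have "real (2*b) = real (m+k)" using b2 by simp
    then show ?thesis using m1 by (simp add: of_nat_diff)
  qed
  have e2: "real k = 2*real b - real m"
  proof -
    have "real (2*b) = real (m+k)" using b2 by simp
    then show ?thesis by simp
  qed
  have p1: "measure M {\<omega>\<in>space M. partial_sum eps (m-1) \<omega> = real k + 1} = real ((m-1) choose b) / 2^(m-1)"
    unfolding e1 by (rule prob_S[OF assms(1,2) bm])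
  have p2: "measure M {\<omega>\<in>space M. partial_sum eps m \<omega> = real k} = real (m choose b) / 2^m"
    unfolding e2 by (rule prob_S[OF assms(1,2)]) (use bm in simp)
  have "delta M eps k i = real ((m-1) choose b) / 2^(m-1) - real (m choose b) / 2^m"
    unfolding delta_def m_def[symmetric] p1 p2 ..
  also have "real ((m-1) choose b) = real (m - b) * real (m choose b) / real m"
  proof -
    have "real ((m - b) * (m choose b)) = real (m * ((m - 1) choose b))" using binomial_absorb_comp by metis
    then show ?thesis using m1 by (simp add: field_simps)
  qed
  also have "real (m - b) = (real m - real k) / 2" using b2 bm
  proof -
    have "real (2*b) = real (m+k)" using b2 by simp
    then show ?thesis using bm by (simp add: of_nat_diff)
  qed
  finally have d: "delta M eps k i = (real m - real k) / 2 * real (m choose b) / real m / 2 ^ (m - 1) - real (m choose b) / 2^m" .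
  have pm: "(2::real)^m = 2 * 2^(m-1)" using m1 by (cases m) auto
  have mp: "real m > 0" using m1 by simp
  show ?thesis unfolding m_def[symmetric] b_def[symmetric] d pm using mp by (simp add: field_simps)
qed

theorem lemma2p2:
  fixes M :: "'a measure" and eps :: "nat \<Rightarrow> 'a \<Rightarrow> real" and k :: nat
  assumes "prob_space M"
    and "rademacher_seq M eps"
    and "k \<ge> 2"
  shows "(\<forall>i. i + 1 \<le> k - 1 \<longrightarrow> delta M eps k i \<le> delta M eps k (i + 1))
         \<and> delta M eps k (k - 1) < 0"
proof
  have kk: "k^2 \<ge> 2*k" using assms(3) by (simp add: power2_eq_square)
  show "\<forall>i. i + 1 \<le> k - 1 \<longrightarrow> delta M eps k i \<le> delta M eps k (i + 1)"
  proof (intro allI impI)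
    fix i
    define m where "m = k^2+2*i"
    define b where "b = (k^2+k) div 2 + i"
    have ev: "even (k^2+k)" by (simp add: power2_eq_square)
    have b2: "2*b = m + k" unfolding b_def m_def using ev by (auto elim!: evenE)
    have bm: "b \<le> m" using b2 kk assms(3) unfolding m_def by linarith
    have m1: "m \<ge> 1" using kk assms(3) unfolding m_def by linarith
    have d0: "delta M eps k i = - real k * real (m choose b) / (real m * 2^m)"
      using delta_formula[OF assms, of i] unfolding m_def b_def .
    have d1: "delta M eps k (i+1) = - real k * real ((m+2) choose (b+1)) / (real (m+2) * 2^(m+2))"
    proof -
      have e: "k^2 + 2*(i+1) = m+2" "(k^2+k) div 2 + (i+1) = b+1" unfolding m_def b_def by auto
      show ?thesis using delta_formula[OF assms, of "i+1"] unfolding e .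
    qed
    define C where "C = real (m choose b)"
    define D where "D = real ((m+2) choose (b+1))"
    define E where "E = real ((m+1) choose b)"
    have r1: "(real b+1)*D = (real m+2)*E"
    proof -
      have h: "m+2-1 = m+1" by simp
      have n: "Suc b * ((m+2) choose (b+1)) = (m+2) * ((m+1) choose b)"
        using binomial_absorption[of b "m+2"] unfolding h Suc_eq_plus1 .
      have "real (Suc b * ((m+2) choose (b+1))) = real ((m+2) * ((m+1) choose b))" using n by (rule arg_cong)
      then have "real (Suc b) * D = real (m+2) * E" unfolding D_def E_def by (simp only: of_nat_mult)
      then show ?thesis by (simp add: add.commute)
    qed
    have r2: "(real m+1-real b)*E = (real m+1)*C"
    proof -
      have "(m+1-b) * ((m+1) choose b) = (m+1) * ((m+1-1) choose b)" by (rule binomial_absorb_comp)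
      then have n: "(m+1-b) * ((m+1) choose b) = (m+1) * (m choose b)" by (metis add_diff_cancel_right')
      have "real ((m+1-b) * ((m+1) choose b)) = real ((m+1) * (m choose b))" using n by (rule arg_cong)
      then have "real (m+1-b) * E = real (m+1) * C" unfolding C_def E_def by (simp only: of_nat_mult)
      moreover have "real (m+1-b) = real m + 1 - real b" using bm by (simp add: of_nat_diff)
      ultimately show ?thesis by (simp add: add.commute)
    qed
    have r3: "(real b+1)*(real m+1-real b)*D = (real m+2)*(real m+1)*C"
    proof -
      have "(real b+1)*(real m+1-real b)*D = (real m+1-real b)*((real b+1)*D)" by (simp add: algebra_simps)
      also have "\<dots> = (real m+2)*((real m+1-real b)*E)" using r1 by (simp add: algebra_simps)
      also have "\<dots> = (real m+2)*(real m+1)*C" using r2 by (simp add: algebra_simps)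
      finally show ?thesis .
    qed
    have B2: "2*real b = real m + real k"
    proof -
      have "real (2*b) = real (m+k)" using b2 by simp
      then show ?thesis by simp
    qed
    have km: "real k ^ 2 \<le> 3 * real m + 4"
    proof -
      have "k^2 \<le> 3*m+4" unfolding m_def by simp
      then have "real (k^2) \<le> real (3*m+4)" by (simp only: of_nat_le_iff)
      then show ?thesis by simp
    qed
    have q: "4*(real b+1)*(real m+1-real b) = (real m+2)^2 - real k^2"
    proof -
      have "4*(real b+1)*(real m+1-real b) = (2*real b+2)*(2*real m+2-2*real b)" by (simp add: algebra_simps)
      also have "\<dots> = (real m + real k + 2)*(real m - real k + 2)" using B2 by simp
      finally show ?thesis by (simp add: algebra_simps power2_eq_square)
    qed
    have Dp: "D \<ge> 0" unfolding D_def by simp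
    have "real m*(real m+1)*D \<le> ((real m+2)^2 - real k^2) * D"
      using km Dp by (intro mult_right_mono) (auto simp: algebra_simps power2_eq_square)
    also have "\<dots> = 4*((real b+1)*(real m+1-real b)*D)" unfolding q[symmetric] by (simp add: algebra_simps)
    also have "\<dots> = 4*((real m+2)*(real m+1)*C)" using r3 by simp
    finally have "(real m+1)*(real m*D) \<le> (real m+1)*(4*(real m+2)*C)" by (simp add: algebra_simps)
    then have key: "real m*D \<le> 4*(real m+2)*C" by (rule mult_left_le_imp_le) simp
    have mp: "real m > 0" using m1 by simp
    have "real k * D / (real (m+2) * 2^(m+2)) \<le> real k * C / (real m * 2^m)"
    proof -
      have p4: "(2::real)^(m+2) = 4 * 2^m" by (simp add: power_add)
      have "real k * D / (real (m+2) * 2^(m+2)) = real k * (real m * D) / (real m * (real m+2) * 4 * 2^m)"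
      proof -
        have "real k * D / (real (m+2) * 2^(m+2)) = real k * D / ((real m+2) * 4 * 2^m)" unfolding p4 by (simp add: mult.assoc)
        also have "\<dots> = (real m * (real k * D)) / (real m * ((real m+2) * 4 * 2^m))" using mp by simp
        finally show ?thesis by (simp add: algebra_simps)
      qed
      also have "\<dots> \<le> real k * (4*(real m+2)*C) / (real m * (real m+2) * 4 * 2^m)"
        using key mp by (intro divide_right_mono mult_left_mono) auto
      also have "\<dots> = ((4*(real m+2)) * (real k * C)) / ((4*(real m+2)) * (real m * 2^m))"
      proof -
        have n: "real k * (4*(real m+2)*C) = (4*(real m+2)) * (real k * C)" by (simp add: algebra_simps)
        have d: "real m * (real m+2) * 4 * 2^m = (4*(real m+2)) * (real m * 2^m)" by (simp add: algebra_simps)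
        show ?thesis by (simp only: n d)
      qed
      also have "\<dots> = real k * C / (real m * 2^m)" by (rule mult_divide_mult_cancel_left[of "4*(real m+2)" "real k * C" "real m * 2^m"]) simp
      finally show ?thesis .
    qed
    then show "delta M eps k i \<le> delta M eps k (i + 1)"
      unfolding d0 d1 C_def[symmetric] D_def[symmetric] minus_mult_left minus_divide_left[symmetric] by linarith
  qed
next
  have kk: "k^2 \<ge> 2*k" using assms(3) by (simp add: power2_eq_square)
  define i where "i = k - 1"
  define m where "m = k^2+2*i"
  define b where "b = (k^2+k) div 2 + i"
  have ev: "even (k^2+k)" by (simp add: power2_eq_square)
  have b2: "2*b = m + k" unfolding b_def m_def using ev by (auto elim!: evenE)
  have bm: "b \<le> m" using b2 kk assms(3) unfolding m_def by linarith
  have m1: "m \<ge> 1" using kk assms(3) unfolding m_def by linarith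
  have "real (m choose b) > 0" using bm by simp
  moreover have "real k > 0" using assms(3) by simp
  ultimately have pos: "real k * real (m choose b) / (real m * 2^m) > 0" using m1 by simp
  have df: "delta M eps k i = - real k * real (m choose b) / (real m * 2^m)"
    using delta_formula[OF assms, of i] unfolding m_def b_def .
  show "delta M eps k (k - 1) < 0"
    using df pos unfolding i_def by linarith
qed

end
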